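(* Let $F:\mathbb R^5\to\mathbb R$, $$F(a,b,c,d,A)=-2(a+c)-2\bigl[(ac+bd)\cos2A+(bc-ad)\sin2A\bigr]+a^2+b^2+c^2+d^2+1,$$ and let $\mathbb S=F^{-1}(0)$. Then at every point of $\mathbb S$ with $-\pi/2<A<\pi/2$, $a^2+b^2\ne0$ and $c^2+d^2\ne0$, the gradient of $F$ is nonzero (i.e. $\mathbb S$ has no singular points there).
   Context: Here $X_1=a+bi$, $X_2=c+di$, and $F=0$ is the equation $-2\,\mathrm{Re}(X_1+X_2)-2\,\mathrm{Re}(X_1\overline{X}_2e^{-2iA})+|X_1|^2+|X_2|^2+1=0$ written in real coordinates; $\mathbb S$ is called the basic variety. A singular point of $\mathbb S$ is a point of $\mathbb S$ at which all partial derivatives of $F$ vanish. *)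

theory Defs
  imports "HOL-Analysis.Analysis"
begin

definition F :: "real \<Rightarrow> real \<Rightarrow> real \<Rightarrow> real \<Rightarrow> real \<Rightarrow> real" where
  "F a b c d A = -2*(a+c) - 2*((a*c + b*d) * cos (2*A) + (b*c - a*d) * sin (2*A))
                 + a^2 + b^2 + c^2 + d^2 + 1"

definition gradF :: "real \<Rightarrow> real \<Rightarrow> real \<Rightarrow> real \<Rightarrow> real \<Rightarrow> real list" where
  "gradF a b c d A =
     [deriv (\<lambda>x. F x b c d A) a,
      deriv (\<lambda>x. F a x c d A) b,
      deriv (\<lambda>x. F a b x d A) c,
      deriv (\<lambda>x. F a b c x A) d,
      deriv (\<lambda>x. F a b c d x) A]"

end

theory Submission
  imports Defs
begin

lemma dA: "deriv (\<lambda>x. F x b c d A) a = -2 - 2*(c * cos (2*A) - d * sin (2*A)) + 2*a"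
  unfolding F_def
  by (rule DERIV_imp_deriv) (auto intro!: derivative_eq_intros simp: algebra_simps)
lemma dB: "deriv (\<lambda>x. F a x c d A) b = -2*(d * cos (2*A) + c * sin (2*A)) + 2*b"
  unfolding F_def
  by (rule DERIV_imp_deriv) (auto intro!: derivative_eq_intros simp: algebra_simps)
lemma dC: "deriv (\<lambda>x. F a b x d A) c = -2 - 2*(a * cos (2*A) + b * sin (2*A)) + 2*c"
  unfolding F_def
  by (rule DERIV_imp_deriv) (auto intro!: derivative_eq_intros simp: algebra_simps)
lemma dD: "deriv (\<lambda>x. F a b c x A) d = -2*(b * cos (2*A) - a * sin (2*A)) + 2*d"
  unfolding F_def
  by (rule DERIV_imp_deriv) (auto intro!: derivative_eq_intros simp: algebra_simps)

theorem proposition3p4: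
  fixes a b c d A :: real
  assumes "F a b c d A = 0"
    and "-(pi/2) < A" and "A < pi/2"
    and "a^2 + b^2 \<noteq> 0" and "c^2 + d^2 \<noteq> 0"
  shows "gradF a b c d A \<noteq> [0, 0, 0, 0, 0]"
proof
  assume h: "gradF a b c d A = [0, 0, 0, 0, 0]"
  define co where "co = cos (2*A)"
  define sn where "sn = sin (2*A)"
  have e1: "a = 1 + c*co - d * sn" and e2: "b = d*co + c * sn"
    and e3: "c = 1 + a*co + b * sn" and e4: "d = b*co - a * sn"
    using h unfolding gradF_def dA dB dC dD co_def sn_def by auto
  have pyth: "co^2 + sn^2 = 1" unfolding co_def sn_def by simp
  have "c*co - d * sn = co + a*(co^2+sn^2)"
    by (subst e3, subst e4) (simp add: algebra_simps power2_eq_square)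
  hence "co = -1" using e1 pyth by simp
  moreover have "cos (2*A) > -1"
  proof -
    have "\<bar>2*A\<bar> < pi" using assms(2,3) by auto
    hence "2*A \<noteq> pi" "2*A \<noteq> -pi" by auto
    moreover have "-pi \<le> 2*A" "2*A \<le> pi" using assms(2,3) by auto
    ultimately show ?thesis
      using cos_ge_minus_one[of "2*A"] cos_eq_minus1[of "2*A"]
      by (smt (verit) cos_minus_pi cos_monotone_0_pi cos_monotone_minus_pi_0 cos_pi)
  qed
  ultimately show False unfolding co_def by simp
qed

end
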